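(* Let $B_1\subseteq B$, $R_1$ the subroot system with simple roots $B_1$, $R_1^+=R_1\cap R^+$, $\rho'=\frac12\sum_{\alpha\in R_1^+}\alpha$. Suppose $w\in W$ and $w(R_1)=R_1$. Then $\big(\rho',\sum_{\alpha\in Q(w)}\alpha\big)\ge 0$, with equality if and only if $w(B_1)=B_1$.
   Context: $R$ is a reduced crystallographic root system with $W$-invariant positive definite inner product $(\cdot,\cdot)$ on the real span of the roots, positive system $R^+$, simple roots $B$ and Weyl group $W$. For $B_1\subseteq B$, $R_1$ is the set of roots in the $\mathbb Z$-span of $B_1$. For $w\in W$, $Q(w)=\{\alpha\in R^+: w\alpha\in -R^+\}$ and $\ell(w)=|Q(w)|$. *)

theory Defs
  imports "HOL-Analysis.Analysis"
begin

definition refl_vec :: "'a::real_inner \<Rightarrow> 'a \<Rightarrow> 'a" where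
  "refl_vec a x = x - ((2 * (x \<bullet> a)) / (a \<bullet> a)) *\<^sub>R a"

definition root_system :: "'a::euclidean_space set \<Rightarrow> bool" where
  "root_system R \<longleftrightarrow> finite R \<and> 0 \<notin> R
     \<and> (\<forall>a\<in>R. \<forall>b\<in>R. refl_vec a b \<in> R)
     \<and> (\<forall>a\<in>R. \<forall>b\<in>R. (2 * (b \<bullet> a)) / (a \<bullet> a) \<in> \<int>)
     \<and> (\<forall>a\<in>R. \<forall>c::real. c *\<^sub>R a \<in> R \<longrightarrow> c = 1 \<or> c = -1)"

definition nonneg_int_comb :: "'a::real_vector set \<Rightarrow> 'a \<Rightarrow> bool" where
  "nonneg_int_comb B x \<longleftrightarrow>
     (\<exists>c. (\<forall>a\<in>B. c a \<in> \<int> \<and> c a \<ge> 0) \<and> x = (\<Sum>a\<in>B. c a *\<^sub>R a))"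

definition int_span :: "'a::real_vector set \<Rightarrow> 'a set" where
  "int_span B = {x. \<exists>c. (\<forall>a\<in>B. c a \<in> \<int>) \<and> x = (\<Sum>a\<in>B. c a *\<^sub>R a)}"

definition simple_roots :: "'a::euclidean_space set \<Rightarrow> 'a set \<Rightarrow> bool" where
  "simple_roots R B \<longleftrightarrow> B \<subseteq> R \<and> independent B
     \<and> (\<forall>b\<in>R. nonneg_int_comb B b \<or> nonneg_int_comb B (- b))"

definition pos_roots :: "'a::euclidean_space set \<Rightarrow> 'a set \<Rightarrow> 'a set" where
  "pos_roots R B = {b\<in>R. nonneg_int_comb B b}"

inductive_set weyl_group :: "'a::euclidean_space set \<Rightarrow> ('a \<Rightarrow> 'a) set" for R where
  weyl_id: "id \<in> weyl_group R"
| weyl_step: "w \<in> weyl_group R \<Longrightarrow> a \<in> R \<Longrightarrow> refl_vec a \<circ> w \<in> weyl_group R"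

text \<open>Subroot system R_1 with simple roots B_1: roots in the Z-span of B_1.\<close>
definition sub_roots :: "'a::euclidean_space set \<Rightarrow> 'a set \<Rightarrow> 'a set" where
  "sub_roots R B1 = R \<inter> int_span B1"

definition inv_set :: "'a::euclidean_space set \<Rightarrow> 'a set \<Rightarrow> ('a \<Rightarrow> 'a) \<Rightarrow> 'a set" where
  "inv_set R B w = {a \<in> pos_roots R B. - (w a) \<in> pos_roots R B}"

end

theory Submission
  imports Defs
begin

lemma refl_linear: "linear (refl_vec a)"
  unfolding refl_vec_def
  by (intro linearI) (simp_all add: inner_add_left algebra_simps add_divide_distrib scaleR_add_left)

lemma refl_inner:
  assumes "a \<noteq> 0"
  shows "refl_vec a x \<bullet> refl_vec a y = x \<bullet> y"
proof -
  have aa: "a \<bullet> a \<noteq> 0" using assms by simp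
  show ?thesis unfolding refl_vec_def
    using aa by (simp add: inner_diff_left inner_diff_right inner_commute field_simps)
qed

lemma refl_self: "a \<noteq> 0 \<Longrightarrow> refl_vec a a = - a"
  unfolding refl_vec_def by (simp add: algebra_simps scaleR_2)

lemma refl_invol: "a \<noteq> 0 \<Longrightarrow> refl_vec a (refl_vec a x) = x"
  unfolding refl_vec_def by (simp add: inner_diff_left field_simps)

lemma weyl_props:
  assumes "root_system R" "w \<in> weyl_group R"
  shows "linear w \<and> (\<forall>x y. w x \<bullet> w y = x \<bullet> y) \<and> w ` R \<subseteq> R"
  using assms(2)
proof induction
  case weyl_id
  then show ?case by (simp add: linear_iff)
next
  case (weyl_step w a)
  have a0: "a \<noteq> 0" using assms(1) weyl_step(2) unfolding root_system_def by auto
  have "linear (refl_vec a \<circ> w)" using weyl_step refl_linear linear_compose by blast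
  moreover have "\<forall>x y. (refl_vec a \<circ> w) x \<bullet> (refl_vec a \<circ> w) y = x \<bullet> y"
    using weyl_step refl_inner[OF a0] by simp
  moreover have "(refl_vec a \<circ> w) ` R \<subseteq> R"
    using weyl_step assms(1) unfolding root_system_def by auto
  ultimately show ?case by blast
qed

lemma inner_pres_inj:
  assumes "linear w" "\<forall>x y. w x \<bullet> w y = x \<bullet> y"
  shows "inj w"
proof (rule injI)
  fix x y assume "w x = w y"
  then have "w (x - y) = 0" using linear_diff[OF assms(1)] by simp
  then have "(x - y) \<bullet> (x - y) = 0" using assms(2) by (metis inner_zero_left)
  then show "x = y" by simp
qed

lemma sum_inv_gen:
  fixes S P :: "'a::real_vector set" and u :: "'a \<Rightarrow> 'a"
  assumes fin: "finite S" and PS: "P \<subseteq> S" and split: "\<forall>x\<in>S. x \<in> P \<or> - x \<in> P"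
    and disj: "\<forall>x\<in>P. - x \<notin> P" and negS: "\<forall>x\<in>P. - x \<in> S"
    and lin: "linear u" and im: "u ` S = S" and inj: "inj_on u S"
  shows "2 *\<^sub>R (\<Sum>a\<in>{a\<in>P. - u a \<in> P}. u a) = u (\<Sum>P) - \<Sum>P"
proof -
  define Q where "Q = {a\<in>P. - u a \<in> P}"
  define A where "A = {a\<in>P. u a \<in> P}"
  have finP: "finite P" using fin PS finite_subset by blast
  have PAQ: "P = A \<union> Q" using split im PS unfolding A_def Q_def by blast
  have AQ: "A \<inter> Q = {}" unfolding A_def Q_def using disj by auto
  have finA: "finite A" "finite Q" using finP PAQ by auto
  have "u (\<Sum>P) = (\<Sum>a\<in>P. u a)" by (simp add: linear_sum[OF lin])
  also have "\<dots> = (\<Sum>a\<in>A. u a) + (\<Sum>a\<in>Q. u a)"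
    using PAQ AQ finA sum.union_disjoint by metis
  finally have e1: "u (\<Sum>P) = (\<Sum>a\<in>A. u a) + (\<Sum>a\<in>Q. u a)" .
  have injA: "inj_on u A" using inj PAQ PS by (meson Un_upper1 inj_on_subset subset_trans)
  have sA: "(\<Sum>a\<in>A. u a) = \<Sum>(u ` A)" using sum.reindex[OF injA, of id] by simp
  have uAP: "u ` A \<subseteq> P" unfolding A_def by auto
  have d1: "P - u ` A \<subseteq> (\<lambda>a. - u a) ` Q"
  proof
    fix b assume "b \<in> P - u ` A"
    then have b: "b \<in> P" "b \<notin> u ` A" by auto
    then have "b \<in> u ` S" using im PS by auto
    then obtain g where g: "g \<in> S" "b = u g" by auto
    have "g \<notin> P" using g b unfolding A_def by auto
    then have "- g \<in> P" using split g by auto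
    moreover have "- u (- g) = b" using g linear_neg[OF lin] by simp
    ultimately show "b \<in> (\<lambda>a. - u a) ` Q" unfolding Q_def using b by force
  qed
  have d2: "(\<lambda>a. - u a) ` Q \<subseteq> P - u ` A"
  proof
    fix b assume "b \<in> (\<lambda>a. - u a) ` Q"
    then obtain a where a: "a \<in> Q" "b = - u a" by auto
    have "b \<in> P" using a unfolding Q_def by auto
    moreover have "b \<notin> u ` A"
    proof
      assume "b \<in> u ` A"
      then obtain a' where a': "a' \<in> A" and eq: "- u a = u a'" using a by auto
      have "u (- a) = u a'" using eq linear_neg[OF lin] by simp
      moreover have "- a \<in> S" "a' \<in> S" using a a' negS PS unfolding Q_def A_def by auto
      ultimately have "- a = a'" using inj by (meson inj_onD)
      then show False using a a' disj unfolding Q_def A_def by auto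
    qed
    ultimately show "b \<in> P - u ` A" by auto
  qed
  have diff: "P - u ` A = (\<lambda>a. - u a) ` Q" using d1 d2 by blast
  have injQ: "inj_on (\<lambda>a. - u a) Q"
    using inj PAQ PS unfolding inj_on_def by (metis UnCI neg_equal_iff_equal subsetD)
  have "\<Sum>P = \<Sum>(u ` A) + \<Sum>(P - u ` A)"
    using uAP finP by (metis add.commute sum.subset_diff)
  also have "\<Sum>(P - u ` A) = (\<Sum>a\<in>Q. - u a)"
    unfolding diff using sum.reindex[OF injQ, of id] by simp
  finally have e2: "\<Sum>P = (\<Sum>a\<in>A. u a) - (\<Sum>a\<in>Q. u a)"
    using sA by (simp add: sum_negf)
  show ?thesis using e1 e2 unfolding Q_def[symmetric] by (simp add: scaleR_2)
qed

lemma int_ge1: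
  assumes "(r::real) \<in> \<int>" "0 < r" shows "1 \<le> r"
proof -
  obtain n where n: "r = of_int n" using assms(1) by (rule Ints_cases)
  then have "0 < n" using assms(2) by simp
  then have "1 \<le> n" by simp
  then show ?thesis using n by simp
qed

locale rsys =
  fixes R B :: "'a::euclidean_space set"
  assumes rs: "root_system R" and sr: "simple_roots R B"
begin

lemma finR: "finite R" using rs unfolding root_system_def by blast
lemma zR: "0 \<notin> R" using rs unfolding root_system_def by blast
lemma reflR: "a \<in> R \<Longrightarrow> b \<in> R \<Longrightarrow> refl_vec a b \<in> R" using rs unfolding root_system_def by blast
lemma redR: "a \<in> R \<Longrightarrow> c *\<^sub>R a \<in> R \<Longrightarrow> c = 1 \<or> c = -1" using rs unfolding root_system_def by blast

lemma BR: "B \<subseteq> R" and indB: "independent B" and combB: "b \<in> R \<Longrightarrow> nonneg_int_comb B b \<or> nonneg_int_comb B (- b)"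
  using sr unfolding simple_roots_def by blast+

lemma finB: "finite B" by (rule finiteI_independent[OF indB])

lemma negR: assumes "a \<in> R" shows "- a \<in> R"
proof -
  have "a \<noteq> 0" using assms zR by blast
  then have "refl_vec a a = - a" by (rule refl_self)
  moreover have "refl_vec a a \<in> R" using reflR[OF assms assms] .
  ultimately show ?thesis by simp
qed

definition co :: "'a \<Rightarrow> 'a \<Rightarrow> real" where
  "co b0 = (SOME g. linear g \<and> (\<forall>x\<in>B. g x = (if x = b0 then 1 else 0)))"

lemma co_ex: "\<exists>g. linear g \<and> (\<forall>x\<in>B. g x = (if x = b0 then (1::real) else 0))"
  by (rule linear_independent_extend[OF indB])

lemma co_both: "linear (co b0) \<and> (\<forall>x\<in>B. co b0 x = (if x = b0 then 1 else 0))"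
  unfolding co_def by (rule someI_ex[OF co_ex])

lemma co_lin: "linear (co b0)" using co_both by blast
lemma co_B: "x \<in> B \<Longrightarrow> co b0 x = (if x = b0 then 1 else 0)" using co_both by blast

lemma co_sum:
  assumes "A \<subseteq> B"
  shows "co b0 (\<Sum>a\<in>A. c a *\<^sub>R a) = (if b0 \<in> A then c b0 else 0)"
proof -
  have "co b0 (\<Sum>a\<in>A. c a *\<^sub>R a) = (\<Sum>a\<in>A. c a * co b0 a)"
    by (simp add: linear_sum[OF co_lin] linear_scale[OF co_lin])
  also have "\<dots> = (\<Sum>a\<in>A. if a = b0 then c a else 0)"
    using assms co_B by (intro sum.cong) auto
  also have "\<dots> = (if b0 \<in> A then c b0 else 0)"
    using finite_subset[OF assms finB] by (simp add: sum.delta)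
  finally show ?thesis .
qed

lemma comb_co:
  assumes "nonneg_int_comb B x"
  shows "\<forall>b\<in>B. co b x \<in> \<int> \<and> co b x \<ge> 0" "x = (\<Sum>b\<in>B. co b x *\<^sub>R b)"
proof -
  obtain c where c: "\<forall>a\<in>B. c a \<in> \<int> \<and> c a \<ge> 0" "x = (\<Sum>a\<in>B. c a *\<^sub>R a)"
    using assms unfolding nonneg_int_comb_def by blast
  have cc: "\<forall>b\<in>B. co b x = c b"
  proof
    fix b assume b: "b \<in> B"
    have "co b (\<Sum>a\<in>B. c a *\<^sub>R a) = c b" using co_sum[of B b c] b by simp
    then show "co b x = c b" unfolding c(2)[symmetric] .
  qed
  show "\<forall>b\<in>B. co b x \<in> \<int> \<and> co b x \<ge> 0" using c(1) cc by auto
  have "(\<Sum>b\<in>B. co b x *\<^sub>R b) = (\<Sum>a\<in>B. c a *\<^sub>R a)" using cc by (intro sum.cong) auto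
  then show "x = (\<Sum>b\<in>B. co b x *\<^sub>R b)" by (rule trans[OF c(2) sym])
qed

abbreviation P where "P \<equiv> pos_roots R B"

lemma P_co: "x \<in> P \<Longrightarrow> b \<in> B \<Longrightarrow> co b x \<in> \<int> \<and> co b x \<ge> 0"
  using comb_co(1)[of x] unfolding pos_roots_def by blast
lemma P_rep: "x \<in> P \<Longrightarrow> x = (\<Sum>b\<in>B. co b x *\<^sub>R b)"
  using comb_co(2)[of x] unfolding pos_roots_def by blast

lemma PR: "P \<subseteq> R" unfolding pos_roots_def by auto
lemma finP: "finite P" using PR finR finite_subset by auto

lemma R_split: "x \<in> R \<Longrightarrow> x \<in> P \<or> - x \<in> P"
  using combB negR unfolding pos_roots_def by auto

lemma P_disj:
  assumes "x \<in> P" shows "- x \<notin> P"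
proof
  assume n: "- x \<in> P"
  have "\<forall>b\<in>B. co b x = 0"
  proof
    fix b assume b: "b \<in> B"
    have "co b (- x) = - co b x" using linear_neg[OF co_lin] by simp
    then show "co b x = 0" using P_co[OF assms b] P_co[OF n b] by auto
  qed
  then have "(\<Sum>b\<in>B. co b x *\<^sub>R b) = 0" by simp
  then have "x = 0" by (rule trans[OF P_rep[OF assms]])
  then show False using assms PR zR by auto
qed

lemma B_P: "B \<subseteq> P"
proof
  fix b assume b: "b \<in> B"
  have "(\<Sum>a\<in>B. (if a = b then 1 else 0) *\<^sub>R a) = (\<Sum>a\<in>B. if a = b then a else 0)"
    by (intro sum.cong) auto
  then have "b = (\<Sum>a\<in>B. (if a = b then 1 else 0) *\<^sub>R a)"
    using b finB by (simp add: sum.delta)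
  then have "nonneg_int_comb B b" unfolding nonneg_int_comb_def
    by (intro exI[of _ "\<lambda>a. if a = b then 1 else 0"]) auto
  then show "b \<in> P" using b BR unfolding pos_roots_def by auto
qed

lemma P_ex1: assumes "x \<in> P" shows "\<exists>b\<in>B. co b x \<ge> 1"
proof (rule ccontr)
  assume "\<not> ?thesis"
  then have "\<forall>b\<in>B. co b x = 0" using P_co[OF assms] int_ge1 by (meson linorder_not_le order_less_le)
  then have "(\<Sum>b\<in>B. co b x *\<^sub>R b) = 0" by simp
  then have "x = 0" by (rule trans[OF P_rep[OF assms]])
  then show False using assms PR zR by auto
qed

lemma simple_refl:
  assumes b: "b \<in> B" and x: "x \<in> P" and ne: "x \<noteq> b"
  shows "refl_vec b x \<in> P"
proof -
  have ex: "\<exists>g\<in>B. g \<noteq> b \<and> co g x > 0"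
  proof (rule ccontr)
    assume nex: "\<not> (\<exists>g\<in>B. g \<noteq> b \<and> co g x > 0)"
    have z: "\<forall>g\<in>B - {b}. co g x = 0"
    proof
      fix g assume g: "g \<in> B - {b}"
      then have "\<not> co g x > 0" using nex by blast
      moreover have "co g x \<ge> 0" using P_co[OF x] g by blast
      ultimately show "co g x = 0" by linarith
    qed
    have "x = (\<Sum>g\<in>B. co g x *\<^sub>R g)" using P_rep[OF x] .
    also have "\<dots> = co b x *\<^sub>R b + (\<Sum>g\<in>B - {b}. co g x *\<^sub>R g)"
      by (rule sum.remove[OF finB b])
    also have "(\<Sum>g\<in>B - {b}. co g x *\<^sub>R g) = 0" using z by simp
    finally have xe1: "x = co b x *\<^sub>R b + 0" .
    then have xe0: "x = co b x *\<^sub>R b" unfolding add_0_right .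
    define c where "c = co b x"
    have xe: "x = c *\<^sub>R b" using xe0 unfolding c_def .
    have "c *\<^sub>R b \<in> R" using xe x PR by auto
    then have "c = 1 \<or> c = -1" using redR[of b c] b BR by auto
    moreover have "c \<noteq> 1" using xe ne by auto
    moreover have "c \<noteq> -1"
    proof
      assume "c = -1"
      then have "- x = b" using xe by simp
      then show False using P_disj[OF x] b B_P by auto
    qed
    ultimately show False by blast
  qed
  then obtain g where g: "g \<in> B" "g \<noteq> b" "co g x > 0" by blast
  define y where "y = refl_vec b x"
  have yR: "y \<in> R" unfolding y_def using reflR b BR x PR by auto
  have cy: "co g y = co g x"
    unfolding y_def refl_vec_def using g co_B[OF b, of g]
    by (simp add: linear_diff[OF co_lin] linear_scale[OF co_lin])
  show ?thesis
  proof (cases "y \<in> P")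
    case True then show ?thesis unfolding y_def .
  next
    case False
    then have "- y \<in> P" using R_split yR by auto
    then have "co g (- y) \<ge> 0" using P_co g by auto
    moreover have "co g (- y) = - co g x" using cy linear_neg[OF co_lin] by simp
    ultimately show ?thesis using g by auto
  qed
qed

definition S where "S = \<Sum>P"

lemma S_simple: assumes b: "b \<in> B" shows "S \<bullet> b = b \<bullet> b"
proof -
  have b0: "b \<noteq> 0" using b BR zR by auto
  have bP: "b \<in> P" using b B_P by auto
  have into: "refl_vec b ` (P - {b}) \<subseteq> P - {b}"
  proof
    fix y assume "y \<in> refl_vec b ` (P - {b})"
    then obtain x where x: "x \<in> P" "x \<noteq> b" "y = refl_vec b x" by auto
    have "y \<in> P" using simple_refl[OF b x(1,2)] x by simp
    moreover have "y \<noteq> b"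
    proof
      assume "y = b"
      have "x = refl_vec b (refl_vec b x)" by (simp add: refl_invol[OF b0])
      also have "\<dots> = refl_vec b b" using \<open>y = b\<close> x(3) by simp
      also have "\<dots> = - b" by (rule refl_self[OF b0])
      finally have "x = - b" .
      then show False using P_disj[OF x(1)] bP by auto
    qed
    ultimately show "y \<in> P - {b}" by auto
  qed
  have inj: "inj_on (refl_vec b) (P - {b})"
    by (rule inj_on_inverseI[where g="refl_vec b"]) (rule refl_invol[OF b0])
  have perm: "refl_vec b ` (P - {b}) = P - {b}"
    using endo_inj_surj[OF _ into inj] finP by auto
  have s1: "(\<Sum>x\<in>P - {b}. refl_vec b x) = (\<Sum>x\<in>P - {b}. x)"
    using sum.reindex[OF inj, of id] perm by simp
  have "refl_vec b S = (\<Sum>x\<in>P. refl_vec b x)"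
    unfolding S_def by (simp add: linear_sum[OF refl_linear])
  also have "\<dots> = refl_vec b b + (\<Sum>x\<in>P - {b}. refl_vec b x)"
    by (rule sum.remove[OF finP bP])
  also have "\<dots> = - b + (\<Sum>x\<in>P - {b}. x)" using s1 refl_self[OF b0] by simp
  also have "(\<Sum>x\<in>P - {b}. x) = S - b" unfolding S_def using bP finP
    by (simp add: sum_diff1)
  finally have e: "refl_vec b S = S - 2 *\<^sub>R b" by (simp add: scaleR_2)
  then have "(2 * (S \<bullet> b) / (b \<bullet> b)) *\<^sub>R b = 2 *\<^sub>R b"
    unfolding refl_vec_def by simp
  then have "2 * (S \<bullet> b) / (b \<bullet> b) = 2" using b0 by simp
  then show ?thesis using b0 by (simp add: field_simps)
qed

lemma S_pos: assumes x: "x \<in> P" shows "S \<bullet> x > 0"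
proof -
  have "S \<bullet> x = S \<bullet> (\<Sum>g\<in>B. co g x *\<^sub>R g)" using P_rep[OF x] by (rule arg_cong)
  also have "\<dots> = (\<Sum>g\<in>B. co g x * (g \<bullet> g))"
    by (simp add: inner_sum_right S_simple)
  finally have e: "S \<bullet> x = (\<Sum>g\<in>B. co g x * (g \<bullet> g))" .
  obtain g where g: "g \<in> B" "co g x \<ge> 1" using P_ex1[OF x] by blast
  have g0: "g \<noteq> 0" using g BR zR by auto
  have "0 < (\<Sum>g\<in>B. co g x * (g \<bullet> g))"
    apply (rule sum_pos2[OF finB g(1)])
    using g g0 apply simp
    using P_co[OF x] by simp
  then show ?thesis using e by simp
qed


lemma int_span_neg: fixes A :: "'a set" shows "x \<in> int_span A \<Longrightarrow> - x \<in> int_span A"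
  unfolding int_span_def
proof safe
  fix c :: "'a \<Rightarrow> real" assume c: "\<forall>a\<in>A. c a \<in> \<int>"
  show "\<exists>d. (\<forall>a\<in>A. d a \<in> \<int>) \<and> - (\<Sum>a\<in>A. c a *\<^sub>R a) = (\<Sum>a\<in>A. d a *\<^sub>R a)"
    by (rule exI[of _ "\<lambda>a. - c a"]) (use c in \<open>auto simp: sum_negf\<close>)
qed

lemma sub_co_zero:
  assumes "A \<subseteq> B" "x \<in> int_span A" "g \<notin> A"
  shows "co g x = 0"
  using assms co_sum[OF assms(1)] unfolding int_span_def by auto

lemma P1_rep:
  assumes A: "A \<subseteq> B" and x: "x \<in> P" "x \<in> int_span A"
  shows "x = (\<Sum>b\<in>A. co b x *\<^sub>R b)"
proof -
  have "(\<Sum>b\<in>A. co b x *\<^sub>R b) = (\<Sum>b\<in>B. co b x *\<^sub>R b)"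
    using sub_co_zero[OF A x(2)] A finB by (intro sum.mono_neutral_left) auto
  then show ?thesis by (rule trans[OF P_rep[OF x(1)] sym])
qed

lemma A_span: assumes "b \<in> A" "A \<subseteq> B" shows "b \<in> int_span A"
proof -
  have fA: "finite A" using assms finB finite_subset by auto
  have "(\<Sum>a\<in>A. (if a = b then 1 else 0) *\<^sub>R a) = (\<Sum>a\<in>A. if a = b then a else 0)"
    by (intro sum.cong) auto
  then have "b = (\<Sum>a\<in>A. (if a = b then 1 else 0) *\<^sub>R a)"
    using assms fA by (simp add: sum.delta)
  then show ?thesis unfolding int_span_def
    by (intro CollectI exI[of _ "\<lambda>a. if a = b then 1 else 0"]) auto
qed

definition ht where "ht x = (\<Sum>b\<in>B. co b x)"

lemma ht_lin: "linear ht"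
  unfolding ht_def by (intro linear_compose_sum) (auto simp: co_lin finB)

lemma ht_B: "b \<in> B \<Longrightarrow> ht b = 1"
  unfolding ht_def using finB by (simp add: co_B sum.delta)

lemma ht_P: assumes x: "x \<in> P" shows "ht x \<ge> 1"
proof -
  obtain g where g: "g \<in> B" "co g x \<ge> 1" using P_ex1[OF x] by blast
  have "co g x \<le> ht x" unfolding ht_def
    by (rule member_le_sum[OF g(1)]) (use P_co[OF x] finB in auto)
  then show ?thesis using g by simp
qed


lemma main:
  assumes B1: "B1 \<subseteq> B" and w: "w \<in> weyl_group R" and wR1: "w ` sub_roots R B1 = sub_roots R B1"
  shows "((1/2) *\<^sub>R (\<Sum>a\<in>sub_roots R B1 \<inter> P. a)) \<bullet> (\<Sum>a\<in>inv_set R B w. a) \<ge> 0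
     \<and> (((1/2) *\<^sub>R (\<Sum>a\<in>sub_roots R B1 \<inter> P. a)) \<bullet> (\<Sum>a\<in>inv_set R B w. a) = 0 \<longleftrightarrow> w ` B1 = B1)"
proof -
  have lin: "linear w" and ip: "\<And>x y. w x \<bullet> w y = x \<bullet> y" and wRR: "w ` R \<subseteq> R"
    using weyl_props[OF rs w] by auto
  have injw: "inj w" using inner_pres_inj lin ip by blast
  have wR: "w ` R = R" using endo_inj_surj[OF finR wRR] injw by (simp add: inj_on_def inj_def)
  define R1 where "R1 = sub_roots R B1"
  define P1 where "P1 = R1 \<inter> P"
  define Q where "Q = inv_set R B w"
  define Q1 where "Q1 = {a\<in>P1. - w a \<in> P1}"
  define S1 where "S1 = (\<Sum>a\<in>P1. a)"
  define V where "V = (\<Sum>a\<in>Q. w a)"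
  define V1 where "V1 = (\<Sum>a\<in>Q1. w a)"
  have R1R: "R1 \<subseteq> R" unfolding R1_def sub_roots_def by auto
  have finR1: "finite R1" using R1R finR finite_subset by auto
  have finP1: "finite P1" using finR1 unfolding P1_def by auto
  have finQ1: "finite Q1" using finP1 unfolding Q1_def by auto
  have negR1: "\<And>x. x \<in> R1 \<Longrightarrow> - x \<in> R1"
    unfolding R1_def sub_roots_def using negR int_span_neg by auto
  have g1: "2 *\<^sub>R V = w S - S"
    unfolding V_def Q_def inv_set_def S_def
    apply (rule sum_inv_gen[OF finR PR])
    using R_split P_disj negR PR lin wR injw by (auto simp: inj_on_def inj_def)
  have g2: "2 *\<^sub>R V1 = w S1 - S1"
    unfolding V1_def Q1_def S1_def
    apply (rule sum_inv_gen[OF finR1])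
    using R_split P_disj negR1 R1R lin wR1 injw unfolding P1_def R1_def
    by (auto simp: inj_on_def inj_def)
  have wQ: "w (\<Sum>a\<in>Q. a) = V" unfolding V_def by (simp add: linear_sum[OF lin])
  have "2 * (S1 \<bullet> (\<Sum>a\<in>Q. a)) = 2 * (w S1 \<bullet> V)" using ip[of S1 "\<Sum>a\<in>Q. a"] wQ by simp
  also have "\<dots> = w S1 \<bullet> (2 *\<^sub>R V)" by simp
  also have "\<dots> = w S1 \<bullet> w S - w S1 \<bullet> S" using g1 by (simp add: inner_diff_right)
  also have "\<dots> = S1 \<bullet> S - (S1 + 2 *\<^sub>R V1) \<bullet> S" using ip g2 by (simp add: algebra_simps)
  also have "\<dots> = - 2 * (V1 \<bullet> S)" by (simp add: inner_add_left)
  finally have k1: "S1 \<bullet> (\<Sum>a\<in>Q. a) = - (V1 \<bullet> S)" by simp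
  define T where "T = (\<Sum>a\<in>Q1. S \<bullet> (- w a))"
  have "V1 \<bullet> S = (\<Sum>a\<in>Q1. w a \<bullet> S)" unfolding V1_def by (rule inner_sum_left)
  also have "\<dots> = (\<Sum>a\<in>Q1. S \<bullet> w a)" by (simp add: inner_commute)
  finally have "- (V1 \<bullet> S) = T" unfolding T_def by (simp add: sum_negf)
  then have key: "((1/2) *\<^sub>R S1) \<bullet> (\<Sum>a\<in>Q. a) = T / 2" using k1 by simp
  have termpos: "S \<bullet> (- w a) > 0" if a: "a \<in> Q1" for a
  proof -
    have "- w a \<in> P" using a unfolding Q1_def P1_def by auto
    then show ?thesis by (rule S_pos)
  qed
  have T0: "T \<ge> 0" unfolding T_def using termpos by (intro sum_nonneg) (auto intro: less_imp_le)
  have TQ: "T = 0 \<longleftrightarrow> Q1 = {}"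
  proof
    assume "T = 0"
    show "Q1 = {}"
    proof (rule ccontr)
      assume "Q1 \<noteq> {}"
      then obtain a where "a \<in> Q1" by auto
      then have "T > 0" unfolding T_def
        using termpos finQ1 by (intro sum_pos2) (auto intro: less_imp_le)
      then show False using \<open>T = 0\<close> by simp
    qed
  qed (simp add: T_def)
  have B1P1: "B1 \<subseteq> P1" using B1 A_span B_P BR unfolding P1_def R1_def sub_roots_def by auto
  have finB1: "finite B1" using B1 finB finite_subset by auto
  have QB: "Q1 = {} \<longleftrightarrow> w ` B1 = B1"
  proof
    assume wB: "w ` B1 = B1"
    show "Q1 = {}"
    proof (rule ccontr)
      assume "Q1 \<noteq> {}"
      then obtain a where a: "a \<in> P1" "- w a \<in> P1" unfolding Q1_def by auto
      have aP: "a \<in> P" "a \<in> int_span B1" using a unfolding P1_def R1_def sub_roots_def by auto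
      have "w a = w (\<Sum>b\<in>B1. co b a *\<^sub>R b)" using P1_rep[OF B1 aP] by (rule arg_cong)
      also have "\<dots> = (\<Sum>b\<in>B1. co b a *\<^sub>R w b)" by (simp add: linear_sum[OF lin] linear_scale[OF lin])
      finally have "w a = (\<Sum>b\<in>B1. co b a *\<^sub>R w b)" .
      then have "S \<bullet> w a = (\<Sum>b\<in>B1. co b a * (S \<bullet> w b))" by (simp add: inner_sum_right)
      also have "\<dots> \<ge> 0"
      proof (rule sum_nonneg)
        fix b assume b: "b \<in> B1"
        have "w b \<in> P" using wB b B1 B_P by auto
        then have "S \<bullet> w b > 0" using S_pos by auto
        moreover have "co b a \<ge> 0" using P_co[OF aP(1)] b B1 by auto
        ultimately show "co b a * (S \<bullet> w b) \<ge> 0" by simp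
      qed
      finally have "S \<bullet> w a \<ge> 0" .
      moreover have "S \<bullet> (- w a) > 0" using a unfolding P1_def by (intro S_pos) auto
      ultimately show False by simp
    qed
  next
    assume Q0: "Q1 = {}"
    have hP1: "\<And>a. a \<in> P1 \<Longrightarrow> w a \<in> P1"
    proof -
      fix a assume a: "a \<in> P1"
      have "w a \<in> R1" using a wR1 unfolding P1_def R1_def by auto
      then have "w a \<in> P1 \<or> - w a \<in> P1" using R_split negR1 R1R unfolding P1_def by auto
      then show "w a \<in> P1" using Q0 a unfolding Q1_def by auto
    qed
    have sub1: "w ` P1 \<subseteq> P1" using hP1 by auto
    have inj1: "inj_on w P1" using injw by (rule inj_on_subset) simp
    have wP1: "w ` P1 = P1" by (rule endo_inj_surj[OF finP1 sub1 inj1])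
    have "w b \<in> B1" if b: "b \<in> B1" for b
    proof -
      have wbP1: "w b \<in> P1" using hP1 B1P1 b by auto
      have wbP: "w b \<in> P" "w b \<in> int_span B1" using wbP1 unfolding P1_def R1_def sub_roots_def by auto
      define d where "d g = co g (w b)" for g
      define \<delta> where "\<delta> g = inv_into P1 w g" for g
      have dl: "\<delta> g \<in> P1 \<and> w (\<delta> g) = g" if g: "g \<in> B1" for g
      proof -
        have "g \<in> w ` P1" using wP1 B1P1 g by auto
        then show ?thesis unfolding \<delta>_def by (simp add: inv_into_into f_inv_into_f)
      qed
      have rep: "w b = (\<Sum>g\<in>B1. d g *\<^sub>R g)" unfolding d_def using P1_rep[OF B1 wbP] .
      also have "\<dots> = (\<Sum>g\<in>B1. d g *\<^sub>R w (\<delta> g))" using dl by (intro sum.cong) auto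
      also have "\<dots> = w (\<Sum>g\<in>B1. d g *\<^sub>R \<delta> g)"
        by (simp add: linear_sum[OF lin] linear_scale[OF lin])
      finally have "b = (\<Sum>g\<in>B1. d g *\<^sub>R \<delta> g)" using injw by (simp add: inj_eq)
      then have "ht b = (\<Sum>g\<in>B1. d g * ht (\<delta> g))"
        by (simp add: linear_sum[OF ht_lin] linear_scale[OF ht_lin])
      also have "\<dots> \<ge> (\<Sum>g\<in>B1. d g)"
      proof (rule sum_mono)
        fix g assume g: "g \<in> B1"
        have "d g \<ge> 0" unfolding d_def using P_co[OF wbP(1)] g B1 by auto
        moreover have "ht (\<delta> g) \<ge> 1" using ht_P dl g unfolding P1_def by auto
        ultimately show "d g \<le> d g * ht (\<delta> g)" by (metis mult_left_mono mult.right_neutral)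
      qed
      finally have le1: "(\<Sum>g\<in>B1. d g) \<le> 1" using ht_B b B1 by auto
      have "ht (w b) = (\<Sum>g\<in>B1. d g)" unfolding ht_def d_def
        using sub_co_zero[OF B1 wbP(2)] B1 finB by (intro sum.mono_neutral_right) auto
      then have ge1: "(\<Sum>g\<in>B1. d g) \<ge> 1" using ht_P[OF wbP(1)] by simp
      obtain g0 where g0: "g0 \<in> B" "co g0 (w b) \<ge> 1" using P_ex1[OF wbP(1)] by blast
      have g0B1: "g0 \<in> B1"
      proof (rule ccontr)
        assume "g0 \<notin> B1"
        then have "co g0 (w b) = 0" by (rule sub_co_zero[OF B1 wbP(2)])
        then show False using g0 by simp
      qed
      have dnn: "\<forall>g\<in>B1. d g \<ge> 0" unfolding d_def using P_co[OF wbP(1)] B1 by auto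
      have sp: "(\<Sum>g\<in>B1. d g) = d g0 + (\<Sum>g\<in>B1 - {g0}. d g)"
        by (rule sum.remove[OF finB1 g0B1])
      have rnn: "(\<Sum>g\<in>B1 - {g0}. d g) \<ge> 0" using dnn by (intro sum_nonneg) auto
      have dg0: "d g0 = 1" and r0: "(\<Sum>g\<in>B1 - {g0}. d g) = 0"
        using sp rnn le1 ge1 g0 unfolding d_def by auto
      have z: "\<forall>g\<in>B1 - {g0}. d g = 0"
        using r0 dnn finB1 sum_nonneg_eq_0_iff[of "B1 - {g0}" d] by auto
      have "w b = d g0 *\<^sub>R g0 + (\<Sum>g\<in>B1 - {g0}. d g *\<^sub>R g)"
        unfolding rep by (rule sum.remove[OF finB1 g0B1])
      also have "(\<Sum>g\<in>B1 - {g0}. d g *\<^sub>R g) = 0" using z by simp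
      finally have "w b = g0" using dg0 by simp
      then show ?thesis using g0B1 by simp
    qed
    then have "w ` B1 \<subseteq> B1" by auto
    moreover have "inj_on w B1" using injw by (rule inj_on_subset) simp
    ultimately show "w ` B1 = B1" by (rule endo_inj_surj[OF finB1])
  qed
  show ?thesis
    using key T0 TQ QB unfolding Q_def S1_def P1_def R1_def by auto
qed

end

theorem mainTheorem3:
  fixes R B B1 :: "'a::euclidean_space set" and w :: "'a \<Rightarrow> 'a"
  assumes "root_system R"
    and "simple_roots R B"
    and "B1 \<subseteq> B"
    and "w \<in> weyl_group R"
    and "w ` sub_roots R B1 = sub_roots R B1"
  defines "\<rho> \<equiv> (1/2) *\<^sub>R (\<Sum>a\<in>sub_roots R B1 \<inter> pos_roots R B. a)"
  shows "\<rho> \<bullet> (\<Sum>a\<in>inv_set R B w. a) \<ge> 0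
     \<and> (\<rho> \<bullet> (\<Sum>a\<in>inv_set R B w. a) = 0 \<longleftrightarrow> w ` B1 = B1)"
proof -
  interpret rsys R B using assms(1,2) by unfold_locales
  show ?thesis unfolding \<rho>_def by (rule main[OF assms(3,4,5)])
qed

end
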